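(* Let $\mathbb X$ be a basic space and $\mathcal D=(D,<,\rho)$ a computable partially ordered set. 1. Every $F\in\mathrm{Max}_{\mathrm{PR}}[\mathbb X\to\mathcal D]$ is of the form $F=\max^{\mathcal D}f$ for some partial computable $f:\mathbb X\times\mathbb N\to D$, monotone increasing in its second argument, such that $\mathrm{dom}(f)=Z\times\mathbb N$ for some $\Sigma^0_1$ (computably enumerable) set $Z\subseteq\mathbb X$. 2. If moreover $F\in\mathrm{Max}_{\mathrm{PR}}[\mathbb X\to\mathcal D]$ has $\Sigma^0_1$ domain, then one can take $Z=\mathrm{dom}(F)$.
   Context: A basic space is a finite non-empty product of sets each of which is $\mathbb N$, $\mathbb Z$, or $A^*$ for some finite alphabet $A$. A computable partially ordered set is a triple $\mathcal D=(D,<,\rho)$ where $\rho:\mathbb N\to D$ is a bijection and $<$ is a strict partial order on $D$ with $\{(m,n):\rho(m)<\rho(n)\}$ computable; a partial function into $D$ is partial computable if its composition with $\rho^{-1}$ is. For a partial $f:\mathbb X\times\mathbb N\to D$ monotone increasing in its second argument on its domain, $\max^{\mathcal D}f$ is the partial function defined exactly at those $x$ for which $\{f(x,t):t,\ f(x,t)\text{ defined}\}$ is finite and non-empty, with value its maximum element. $\mathrm{Max}_{\mathrm{PR}}[\mathbb X\to\mathcal D]$ is the class of all $\max^{\mathcal D}f$ with $f$ partial computable and monotone increasing in its second argument. *)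

theory Defs
  imports Main "HOL-Library.Nat_Bijection"
begin

datatype recf = Zero | Succ | Proj nat | Comp recf "recf list" | Prim recf recf | Mini recf

inductive eval :: "recf \<Rightarrow> nat list \<Rightarrow> nat \<Rightarrow> bool" where
  zero: "eval Zero xs 0"
| succ: "eval Succ (x # xs) (Suc x)"
| proj: "i < length xs \<Longrightarrow> eval (Proj i) xs (xs ! i)"
| comp: "list_all2 (\<lambda>g y. eval g xs y) gs ys \<Longrightarrow> eval f ys z \<Longrightarrow> eval (Comp f gs) xs z"
| prim0: "eval g xs z \<Longrightarrow> eval (Prim g h) (0 # xs) z"
| primS: "eval (Prim g h) (n # xs) y \<Longrightarrow> eval h (n # y # xs) z \<Longrightarrow> eval (Prim g h) (Suc n # xs) z"
| mini: "eval f (n # xs) 0 \<Longrightarrow> (\<forall>m<n. \<exists>y>0. eval f (m # xs) y) \<Longrightarrow> eval (Mini f) xs n"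

text \<open>Descriptors: N, Z, A* with A = {0..<k}, and (nested binary) products.\<close>
datatype bspace = SN | SZ | SW nat | SProd bspace bspace

datatype val = VN nat | VZ int | VW "nat list" | VP val val

fun elems :: "bspace \<Rightarrow> val set" where
  "elems SN = range VN"
| "elems SZ = range VZ"
| "elems (SW k) = VW ` {w. set w \<subseteq> {..<k}}"
| "elems (SProd a b) = {VP x y | x y. x \<in> elems a \<and> y \<in> elems b}"

fun enc :: "val \<Rightarrow> nat" where
  "enc (VN n) = n"
| "enc (VZ i) = int_encode i"
| "enc (VW w) = list_encode w"
| "enc (VP x y) = prod_encode (enc x, enc y)"

definition computable_order :: "('d \<Rightarrow> 'd \<Rightarrow> bool) \<Rightarrow> (nat \<Rightarrow> 'd) \<Rightarrow> bool" where
  "computable_order lt \<rho> \<longleftrightarrow>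
     (\<exists>r. \<forall>m n. eval r [prod_encode (m, n)] (if lt (\<rho> m) (\<rho> n) then 1 else 0))"

definition pcomp2 :: "bspace \<Rightarrow> (nat \<Rightarrow> 'd) \<Rightarrow> (val \<Rightarrow> nat \<Rightarrow> 'd option) \<Rightarrow> bool" where
  "pcomp2 X \<rho> f \<longleftrightarrow>
     (\<exists>r. \<forall>x\<in>elems X. \<forall>t y. eval r [enc (VP x (VN t))] y \<longleftrightarrow> f x t = Some (\<rho> y))"

definition sigma01 :: "bspace \<Rightarrow> val set \<Rightarrow> bool" where
  "sigma01 X Z \<longleftrightarrow> Z \<subseteq> elems X \<and>
     (\<exists>r. \<forall>x\<in>elems X. x \<in> Z \<longleftrightarrow> (\<exists>y. eval r [enc x] y))"

definition mono2 :: "bspace \<Rightarrow> ('d \<Rightarrow> 'd \<Rightarrow> bool) \<Rightarrow> (val \<Rightarrow> nat \<Rightarrow> 'd option) \<Rightarrow> bool" where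
  "mono2 X lt f \<longleftrightarrow> (\<forall>x\<in>elems X. \<forall>s t a b. s \<le> t \<longrightarrow> f x s = Some a \<longrightarrow> f x t = Some b
       \<longrightarrow> (a = b \<or> lt a b))"

definition maxD :: "('d \<Rightarrow> 'd \<Rightarrow> bool) \<Rightarrow> (val \<Rightarrow> nat \<Rightarrow> 'd option) \<Rightarrow> val \<Rightarrow> 'd option" where
  "maxD lt f x = (let S = {d. \<exists>t. f x t = Some d} in
     if finite S \<and> S \<noteq> {} then Some (THE m. m \<in> S \<and> (\<forall>d\<in>S. d = m \<or> lt d m)) else None)"

definition MaxPR :: "bspace \<Rightarrow> ('d \<Rightarrow> 'd \<Rightarrow> bool) \<Rightarrow> (nat \<Rightarrow> 'd) \<Rightarrow> (val \<Rightarrow> 'd option) \<Rightarrow> bool" where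
  "MaxPR X lt \<rho> F \<longleftrightarrow> (\<exists>f. pcomp2 X \<rho> f \<and> mono2 X lt f \<and> (\<forall>x\<in>elems X. F x = maxD lt f x))"

end

theory Submission
  imports Defs
begin


section \<open>Determinism\<close>

lemma list_all2_det:
  assumes "list_all2 (\<lambda>g y. P g y \<and> (\<forall>y'. P g y' \<longrightarrow> y = y')) gs ys"
    and "list_all2 P gs ys'"
  shows "ys = ys'"
  using assms
proof (induction gs arbitrary: ys ys')
  case Nil then show ?case by simp
next
  case (Cons g gs)
  from Cons.prems(1) obtain y ysr where 1: "ys = y # ysr" "P g y" "\<forall>y'. P g y' \<longrightarrow> y = y'"
    "list_all2 (\<lambda>g y. P g y \<and> (\<forall>y'. P g y' \<longrightarrow> y = y')) gs ysr"
    unfolding list_all2_Cons1 by blast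
  from Cons.prems(2) obtain y' ysr' where 2: "ys' = y' # ysr'" "P g y'" "list_all2 P gs ysr'"
    unfolding list_all2_Cons1 by blast
  have "y = y'" using 1(3) 2(2) by blast
  moreover have "ysr = ysr'" using Cons.IH[OF 1(4) 2(3)] .
  ultimately show ?case using 1(1) 2(1) by simp
qed

inductive_cases evZeroE: "eval Zero xs y"
inductive_cases evSuccE: "eval Succ xs y"
inductive_cases evProjE: "eval (Proj i) xs y"
inductive_cases evCompE: "eval (Comp f gs) xs y"
inductive_cases evPrim0E: "eval (Prim g h) (0 # xs) y"
inductive_cases evPrimSE: "eval (Prim g h) (Suc n # xs) y"
inductive_cases evMiniE: "eval (Mini f) xs y"

lemma eval_det: "eval r xs y \<Longrightarrow> eval r xs y' \<Longrightarrow> y = y'"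
proof (induction arbitrary: y' rule: eval.induct)
  case (zero xs) then show ?case by (rule evZeroE) simp
next
  case (succ x xs) then show ?case by (rule evSuccE) simp
next
  case (proj i xs) from proj.prems show ?case by (rule evProjE) simp
next
  case (comp xs gs ys f z)
  from comp.prems obtain ys' where a: "list_all2 (\<lambda>g. eval g xs) gs ys'" and b: "eval f ys' y'"
    by (rule evCompE)
  have "ys = ys'"
    by (rule list_all2_det[where P="\<lambda>g y. eval g xs y"]) (use comp.IH(1) a in auto)
  then show ?case using comp.IH(2) b by simp
next
  case (prim0 g xs z h) then show ?case by (elim evPrim0E) simp
next
  case (primS g h n xs y z)
  from primS.prems obtain y1 where "eval (Prim g h) (n # xs) y1" "eval h (n # y1 # xs) y'"
    by (rule evPrimSE)
  then show ?case using primS.IH by simp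
next
  case (mini f n xs)
  from mini.prems have a: "eval f (y' # xs) 0" by (rule evMiniE) simp
  from mini.prems have b: "\<forall>m<y'. \<exists>y>0. eval f (m # xs) y" by (rule evMiniE) simp
  show ?case
  proof (rule ccontr)
    assume "n \<noteq> y'"
    then have "n < y' \<or> y' < n" by auto
    then show False
    proof
      assume "n < y'"
      with b obtain y where "y > 0" "eval f (n # xs) y" by auto
      then show False using mini(2)[of y] by simp
    next
      assume "y' < n"
      with mini(3) obtain y where "y > 0" "eval f (y' # xs) y" "\<forall>w. eval f (y' # xs) w \<longrightarrow> y = w"
        by blast
      then have "y = 0" using a by blast
      with \<open>y > 0\<close> show False by simp
    qed
  qed
qed

definition "C1 = Comp Succ [Zero]"
definition "ADD = Prim (Proj 0) (Comp Succ [Proj 1])"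
definition "PRED = Prim Zero (Proj 0)"
definition "SUBR = Prim (Proj 0) (Comp PRED [Proj 1])"
definition "SUB2 = Comp SUBR [Proj 1, Proj 0]"
definition "IFZ = Prim (Proj 1) (Proj 2)"
definition "TRI = Prim Zero (Comp ADD [Comp Succ [Proj 0], Proj 1])"
definition "PE = Comp ADD [Comp TRI [Comp ADD [Proj 0, Proj 1]], Proj 0]"

lemma eval_Comp1: "eval g xs y \<Longrightarrow> eval f [y] z \<Longrightarrow> eval (Comp f [g]) xs z"
  by (rule eval.comp[of _ _ "[y]"]) auto
lemma eval_Comp2: "eval g1 xs y1 \<Longrightarrow> eval g2 xs y2 \<Longrightarrow> eval f [y1, y2] z \<Longrightarrow> eval (Comp f [g1, g2]) xs z"
  by (rule eval.comp[of _ _ "[y1, y2]"]) auto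
lemma eval_Comp3: "eval g1 xs y1 \<Longrightarrow> eval g2 xs y2 \<Longrightarrow> eval g3 xs y3 \<Longrightarrow> eval f [y1, y2, y3] z
   \<Longrightarrow> eval (Comp f [g1, g2, g3]) xs z"
  by (rule eval.comp[of _ _ "[y1, y2, y3]"]) auto

lemma eval_Proj: "i < length xs \<Longrightarrow> y = xs ! i \<Longrightarrow> eval (Proj i) xs y"
  using eval.proj by simp

lemma eval_Zero: "y = 0 \<Longrightarrow> eval Zero xs y"
  using eval.zero by simp

lemma eval_C1: "eval C1 xs 1"
  unfolding C1_def by (rule eval_Comp1[OF eval.zero]) (simp add: eval.succ[of 0 "[]", simplified])

lemma eval_Succ1: "eval g xs y \<Longrightarrow> eval (Comp Succ [g]) xs (Suc y)"
  by (rule eval_Comp1) (auto intro: eval.succ)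

lemma eval_ADD0: "eval ADD [a, b] (a + b)"
  unfolding ADD_def
proof (induction a)
  case 0 then show ?case using eval.prim0[of "Proj 0" "[b]" b] eval_Proj[of 0 "[b]" b] by simp
next
  case (Suc a)
  have "eval (Comp Succ [Proj 1]) [a, a + b, b] (Suc (a + b))"
    by (rule eval_Succ1, rule eval_Proj) auto
  then show ?case using eval.primS[OF Suc] by simp
qed

lemma eval_ADD: "z = a + b \<Longrightarrow> eval ADD [a, b] z"
  using eval_ADD0 by simp

lemma eval_PRED0: "eval PRED [a] (a - 1)"
  unfolding PRED_def
proof (induction a)
  case 0 then show ?case using eval.prim0[of Zero "[]" 0 "Proj 0"] eval.zero by simp
next
  case (Suc a)
  have "eval (Proj 0) [a, a - 1] a" by (rule eval_Proj) auto
  then show ?case using eval.primS[OF Suc] by simp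
qed

lemma eval_PRED: "y = a - 1 \<Longrightarrow> eval PRED [a] y"
  using eval_PRED0 by simp

lemma eval_SUBR0: "eval SUBR [b, a] (a - b)"
  unfolding SUBR_def
proof (induction b)
  case 0 then show ?case using eval.prim0[of "Proj 0" "[a]" a] eval_Proj[of 0 "[a]" a] by simp
next
  case (Suc b)
  have "eval (Comp PRED [Proj 1]) [b, a - b, a] (a - Suc b)"
    by (rule eval_Comp1[OF eval_Proj[of 1 _ "a - b"] eval_PRED]) auto
  then show ?case using eval.primS[OF Suc] by simp
qed

lemma eval_SUB2: assumes "z = a - b" shows "eval SUB2 [a, b] z"
  unfolding SUB2_def
  by (rule eval_Comp2[OF eval_Proj[of 1 _ b] eval_Proj[of 0 _ a]]) (auto simp: assms eval_SUBR0)

lemma eval_IFZ0: "eval IFZ [c, a, b] (if c = 0 then b else a)"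
  unfolding IFZ_def
proof (induction c)
  case 0 then show ?case using eval.prim0[of "Proj 1" "[a, b]" b] eval_Proj[of 1 "[a, b]" b] by simp
next
  case (Suc c)
  have "eval (Proj 2) [c, if c = 0 then b else a, a, b] a" by (rule eval_Proj) auto
  then show ?case using eval.primS[OF Suc] by simp
qed

lemma eval_IFZ: "z = (if c = 0 then b else a) \<Longrightarrow> eval IFZ [c, a, b] z"
  using eval_IFZ0 by simp

lemma eval_TRI0: "eval TRI [d] (triangle d)"
  unfolding TRI_def
proof (induction d)
  case 0 then show ?case by (rule eval.prim0, rule eval_Zero) simp
next
  case (Suc d)
  have "eval (Comp ADD [Comp Succ [Proj 0], Proj 1]) [d, triangle d] (triangle (Suc d))"
    by (rule eval_Comp2[OF eval_Succ1[OF eval_Proj[of 0 "[d, triangle d]" d]]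
          eval_Proj[of 1 "[d, triangle d]" "triangle d"] eval_ADD]) auto
  then show ?case by (rule eval.primS[OF Suc])
qed

lemma eval_TRI: "z = triangle d \<Longrightarrow> eval TRI [d] z"
  using eval_TRI0 by simp

lemma eval_PE: assumes "z = prod_encode (a, b)" shows "eval PE [a, b] z"
proof -
  have 1: "eval (Comp ADD [Proj 0, Proj 1]) [a, b] (a + b)"
    by (rule eval_Comp2[OF eval_Proj eval_Proj eval_ADD]) auto
  have 2: "eval (Comp TRI [Comp ADD [Proj 0, Proj 1]]) [a, b] (triangle (a + b))"
    by (rule eval_Comp1[OF 1 eval_TRI]) simp
  show ?thesis unfolding PE_def
    by (rule eval_Comp2[OF 2 eval_Proj eval_ADD]) (auto simp: assms prod_encode_def)
qed



primrec pfold :: "(nat \<Rightarrow> nat \<Rightarrow> nat) \<Rightarrow> nat \<Rightarrow> nat \<Rightarrow> nat" where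
  "pfold \<phi> g0 0 = g0"
| "pfold \<phi> g0 (Suc c) = (if pfold \<phi> g0 c = 0 then 0 else \<phi> c (pfold \<phi> g0 c - 1))"

primrec mfold :: "(nat \<Rightarrow> nat) \<Rightarrow> nat \<Rightarrow> nat" where
  "mfold \<phi> 0 = 0"
| "mfold \<phi> (Suc c) = (if mfold \<phi> c \<noteq> 0 then mfold \<phi> c
      else if \<phi> c = 0 then 1 else if \<phi> c = 1 then Suc (Suc c) else 0)"

lemma pfold_cong_aux: "\<forall>j<c. \<forall>w. \<phi> j w = \<psi> j w \<Longrightarrow> pfold \<phi> g0 c = pfold \<psi> g0 c"
  by (induction c) auto

lemma pfold_cong [fundef_cong]:
  "(\<And>j w. j < c \<Longrightarrow> \<phi> j w = \<psi> j w) \<Longrightarrow> g0 = g0' \<Longrightarrow> c = c' \<Longrightarrow> pfold \<phi> g0 c = pfold \<psi> g0' c'"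
  using pfold_cong_aux by blast

lemma mfold_cong_aux: "\<forall>j<c. \<phi> j = \<psi> j \<Longrightarrow> mfold \<phi> c = mfold \<psi> c"
  by (induction c) auto

lemma mfold_cong [fundef_cong]:
  "(\<And>j. j < c \<Longrightarrow> \<phi> j = \<psi> j) \<Longrightarrow> c = c' \<Longrightarrow> mfold \<phi> c = mfold \<psi> c'"
  using mfold_cong_aux by blast

lemma mfold_0_iff: "mfold \<phi> c = 0 \<longleftrightarrow> (\<forall>j<c. 2 \<le> \<phi> j)"
  by (induction c) (auto simp: less_Suc_eq)

lemma mfold_SS_iff: "mfold \<phi> c = Suc (Suc m) \<longleftrightarrow> (m < c \<and> \<phi> m = 1 \<and> (\<forall>j<m. 2 \<le> \<phi> j))"
proof (induction c)
  case 0 then show ?case by simp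
next
  case (Suc c)
  show ?case
  proof (cases "mfold \<phi> c = 0")
    case True
    then have all: "\<forall>j<c. 2 \<le> \<phi> j" by (simp add: mfold_0_iff)
    show ?thesis
    proof (cases "\<phi> c = 1")
      case True
      then show ?thesis using all \<open>mfold \<phi> c = 0\<close>
        by (auto simp: less_Suc_eq)
    next
      case False
      then show ?thesis using all \<open>mfold \<phi> c = 0\<close> Suc.IH
        by (auto simp: less_Suc_eq)
    qed
  next
    case False
    then show ?thesis using Suc.IH mfold_0_iff[of \<phi> c]
      by (auto simp: less_Suc_eq)
  qed
qed

fun bsem :: "recf \<Rightarrow> nat \<Rightarrow> nat list \<Rightarrow> nat" where
  "bsem Zero k xs = 1"
| "bsem Succ k xs = (case xs of [] \<Rightarrow> 0 | x # _ \<Rightarrow> Suc (Suc x))"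
| "bsem (Proj i) k xs = (if i < length xs then Suc (xs ! i) else 0)"
| "bsem (Comp f gs) k xs = (let vs = map (\<lambda>g. bsem g k xs) gs in
     if 0 \<in> set vs then 0 else bsem f k (map (\<lambda>v. v - 1) vs))"
| "bsem (Prim g h) k xs = (case xs of [] \<Rightarrow> 0
     | c # ys \<Rightarrow> pfold (\<lambda>j w. bsem h k (j # w # ys)) (bsem g k ys) c)"
| "bsem (Mini f) k xs = mfold (\<lambda>j. bsem f k (j # xs)) k - 1"


lemma bsem_Comp_eq: "bsem (Comp f gs) k xs =
  (if (\<exists>g\<in>set gs. bsem g k xs = 0) then 0 else bsem f k (map (\<lambda>g. bsem g k xs - 1) gs))"
  by (auto simp: Let_def comp_def image_iff)

declare bsem.simps(4)[simp del]

lemma bsem_sound: "bsem r k xs = Suc y \<Longrightarrow> eval r xs y"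
proof (induction r arbitrary: k xs y)
  case Zero then show ?case by (simp add: eval.zero)
next
  case Succ then show ?case by (cases xs) (auto intro: eval.succ)
next
  case (Proj i) then show ?case by (auto split: if_splits intro: eval.proj)
next
  case (Comp f gs)
  from Comp.prems have nz: "\<forall>g\<in>set gs. bsem g k xs \<noteq> 0"
    and fy: "bsem f k (map (\<lambda>g. bsem g k xs - 1) gs) = Suc y"
    by (auto simp: bsem_Comp_eq split: if_splits)
  have "list_all2 (\<lambda>g y. eval g xs y) gs (map (\<lambda>g. bsem g k xs - 1) gs)"
    unfolding list_all2_map2 list_all2_same
  proof
    fix g assume g: "g \<in> set gs"
    with nz have "bsem g k xs = Suc (bsem g k xs - 1)" by simp
    then show "eval g xs (bsem g k xs - 1)" using Comp.IH(2)[OF g] by blast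
  qed
  then show ?case using Comp.IH(1)[OF fy] by (rule eval.comp)
next
  case (Prim g h)
  show ?case
  proof (cases xs)
    case Nil then show ?thesis using Prim.prems by simp
  next
    case (Cons c ys)
    have "\<forall>y. pfold (\<lambda>j w. bsem h k (j # w # ys)) (bsem g k ys) c = Suc y \<longrightarrow> eval (Prim g h) (c # ys) y"
    proof (induction c)
      case 0 then show ?case using Prim.IH(1) by (auto intro: eval.prim0)
    next
      case (Suc c)
      show ?case
      proof (intro allI impI)
        fix y assume a: "pfold (\<lambda>j w. bsem h k (j # w # ys)) (bsem g k ys) (Suc c) = Suc y"
        define v where "v = pfold (\<lambda>j w. bsem h k (j # w # ys)) (bsem g k ys) c"
        have v0: "v \<noteq> 0" using a by (simp add: v_def split: if_splits)
        then have "v = Suc (v - 1)" by simp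
        then have e1: "eval (Prim g h) (c # ys) (v - 1)" using Suc.IH v_def by metis
        have "bsem h k (c # (v - 1) # ys) = Suc y" using a v0 by (simp add: v_def)
        then have e2: "eval h (c # (v - 1) # ys) y" using Prim.IH(2) by blast
        show "eval (Prim g h) (Suc c # ys) y" by (rule eval.primS[OF e1 e2])
      qed
    qed
    then show ?thesis using Prim.prems Cons by simp
  qed
next
  case (Mini f)
  from Mini.prems have "mfold (\<lambda>j. bsem f k (j # xs)) k = Suc (Suc y)" by simp
  then have c: "y < k" "bsem f k (y # xs) = Suc 0" "\<forall>j<y. 2 \<le> bsem f k (j # xs)"
    unfolding mfold_SS_iff by auto
  have "eval f (y # xs) 0" using Mini.IH c(2) by blast
  moreover have "\<forall>m<y. \<exists>z>0. eval f (m # xs) z"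
  proof (intro allI impI)
    fix m assume "m < y"
    with c(3) have "bsem f k (m # xs) = Suc (bsem f k (m # xs) - 1)" "0 < bsem f k (m # xs) - 1" by auto
    then show "\<exists>z>0. eval f (m # xs) z" using Mini.IH by blast
  qed
  ultimately show ?case by (rule eval.mini)
qed

lemma bsem_mono: "bsem r k xs = Suc y \<Longrightarrow> k \<le> k' \<Longrightarrow> bsem r k' xs = Suc y"
proof (induction r arbitrary: k xs y)
  case Zero then show ?case by simp
next
  case Succ then show ?case by (cases xs) auto
next
  case (Proj i) then show ?case by (auto split: if_splits)
next
  case (Comp f gs)
  from Comp.prems have nz: "\<forall>g\<in>set gs. bsem g k xs \<noteq> 0"
    and fy: "bsem f k (map (\<lambda>g. bsem g k xs - 1) gs) = Suc y"
    by (auto simp: bsem_Comp_eq split: if_splits)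
  have eq: "\<forall>g\<in>set gs. bsem g k' xs = bsem g k xs"
  proof
    fix g assume g: "g \<in> set gs"
    with nz have "bsem g k xs = Suc (bsem g k xs - 1)" by simp
    then show "bsem g k' xs = bsem g k xs" using Comp.IH(2)[OF g] Comp.prems(2) by metis
  qed
  then have m: "map (\<lambda>g. bsem g k' xs - 1) gs = map (\<lambda>g. bsem g k xs - 1) gs" by simp
  have nz': "\<forall>g\<in>set gs. bsem g k' xs \<noteq> 0" using eq nz by simp
  show ?case unfolding bsem_Comp_eq m using nz' Comp.IH(1)[OF fy Comp.prems(2)] by auto
next
  case (Prim g h)
  show ?case
  proof (cases xs)
    case Nil then show ?thesis using Prim.prems by simp
  next
    case (Cons c ys)
    have "\<forall>y. pfold (\<lambda>j w. bsem h k (j # w # ys)) (bsem g k ys) c = Suc y \<longrightarrow>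
       pfold (\<lambda>j w. bsem h k' (j # w # ys)) (bsem g k' ys) c = Suc y"
    proof (induction c)
      case 0 then show ?case using Prim.IH(1) Prim.prems(2) by auto
    next
      case (Suc c)
      show ?case
      proof (intro allI impI)
        fix y assume a: "pfold (\<lambda>j w. bsem h k (j # w # ys)) (bsem g k ys) (Suc c) = Suc y"
        define v where "v = pfold (\<lambda>j w. bsem h k (j # w # ys)) (bsem g k ys) c"
        have v0: "v \<noteq> 0" using a by (simp add: v_def split: if_splits)
        then have "v = Suc (v - 1)" by simp
        then have e1: "pfold (\<lambda>j w. bsem h k' (j # w # ys)) (bsem g k' ys) c = v"
          using Suc.IH v_def by metis
        have "bsem h k (c # (v - 1) # ys) = Suc y" using a v0 by (simp add: v_def)
        then have e2: "bsem h k' (c # (v - 1) # ys) = Suc y" using Prim.IH(2) Prim.prems(2) by blast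
        show "pfold (\<lambda>j w. bsem h k' (j # w # ys)) (bsem g k' ys) (Suc c) = Suc y"
          using e1 e2 v0 by simp
      qed
    qed
    then show ?thesis using Prim.prems Cons by simp
  qed
next
  case (Mini f)
  from Mini.prems have "mfold (\<lambda>j. bsem f k (j # xs)) k = Suc (Suc y)" by simp
  then have c: "y < k" "bsem f k (y # xs) = Suc 0" "\<forall>j<y. 2 \<le> bsem f k (j # xs)"
    unfolding mfold_SS_iff by auto
  have "y < k'" using c(1) Mini.prems(2) by simp
  moreover have "bsem f k' (y # xs) = Suc 0" using Mini.IH c(2) Mini.prems(2) by blast
  moreover have "\<forall>j<y. 2 \<le> bsem f k' (j # xs)"
  proof (intro allI impI)
    fix j assume "j < y"
    with c(3) have "bsem f k (j # xs) = Suc (bsem f k (j # xs) - 1)" "2 \<le> bsem f k (j # xs)" by auto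
    then show "2 \<le> bsem f k' (j # xs)" using Mini.IH Mini.prems(2) by metis
  qed
  ultimately have "mfold (\<lambda>j. bsem f k' (j # xs)) k' = Suc (Suc y)"
    unfolding mfold_SS_iff by auto
  then show ?case by simp
qed

lemma common_list:
  "list_all2 (\<lambda>g y. eval g xs y \<and> (\<exists>k. \<forall>k'\<ge>k. bsem g k' xs = Suc y)) gs ys \<Longrightarrow>
   \<exists>K. \<forall>k'\<ge>K. map (\<lambda>g. bsem g k' xs) gs = map Suc ys"
proof (induction rule: list_all2_induct)
  case Nil then show ?case by simp
next
  case (Cons g gs y ys)
  then obtain k1 K where "\<forall>k'\<ge>k1. bsem g k' xs = Suc y" "\<forall>k'\<ge>K. map (\<lambda>g. bsem g k' xs) gs = map Suc ys"
    by blast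
  then show ?case by (intro exI[of _ "max k1 K"]) auto
qed

lemma common_nat:
  "\<forall>m<n. \<exists>z>0. eval f (m # xs) z \<and> (\<exists>k. \<forall>k'\<ge>k. bsem f k' (m # xs) = Suc z) \<Longrightarrow>
   \<exists>K. \<forall>k'\<ge>K. \<forall>m<n. 2 \<le> bsem f k' (m # xs)"
proof (induction n)
  case 0 then show ?case by simp
next
  case (Suc n)
  then obtain K where K: "\<forall>k'\<ge>K. \<forall>m<n. 2 \<le> bsem f k' (m # xs)" by auto
  from Suc.prems obtain z k where "z > 0" "\<forall>k'\<ge>k. bsem f k' (n # xs) = Suc z" by blast
  then have "\<forall>k'\<ge>max K k. \<forall>m<Suc n. 2 \<le> bsem f k' (m # xs)"
    using K by (auto simp: less_Suc_eq)
  then show ?case by blast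
qed

lemma bsem_complete: "eval r xs y \<Longrightarrow> \<exists>k. \<forall>k'\<ge>k. bsem r k' xs = Suc y"
proof (induction rule: eval.induct)
  case (zero xs) then show ?case by simp
next
  case (succ x xs) then show ?case by simp
next
  case (proj i xs) then show ?case by simp
next
  case (comp xs gs ys f z)
  from common_list[OF comp.IH(1)] obtain K where K: "\<forall>k'\<ge>K. map (\<lambda>g. bsem g k' xs) gs = map Suc ys" by blast
  from comp.IH(2) obtain kf where kf: "\<forall>k'\<ge>kf. bsem f k' ys = Suc z" by blast
  have "\<forall>k'\<ge>max K kf. bsem (Comp f gs) k' xs = Suc z"
  proof (intro allI impI)
    fix k' assume "max K kf \<le> k'"
    then have 1: "map (\<lambda>g. bsem g k' xs) gs = map Suc ys" and 2: "bsem f k' ys = Suc z" using K kf by auto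
    have "map (\<lambda>v. v - 1) (map (\<lambda>g. bsem g k' xs) gs) = ys" unfolding 1 by (simp add: o_def)
    then have 3: "map (\<lambda>g. bsem g k' xs - 1) gs = ys" by (simp add: comp_def)
    have "0 \<notin> set (map (\<lambda>g. bsem g k' xs) gs)" unfolding 1 by auto
    then have 4: "\<not> (\<exists>g\<in>set gs. bsem g k' xs = 0)" by (auto simp: image_iff)
    show "bsem (Comp f gs) k' xs = Suc z" using 2 3 4 by (simp add: bsem_Comp_eq)
  qed
  then show ?case by blast
next
  case (prim0 g xs z h) then show ?case by simp
next
  case (primS g h n xs y z)
  from primS.IH obtain k1 k2 where a: "\<forall>k'\<ge>k1. bsem (Prim g h) k' (n # xs) = Suc y"
    and b: "\<forall>k'\<ge>k2. bsem h k' (n # y # xs) = Suc z" by blast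
  have "\<forall>k'\<ge>max k1 k2. bsem (Prim g h) k' (Suc n # xs) = Suc z"
    using a b by auto
  then show ?case by blast
next
  case (mini f n xs)
  from common_nat[OF mini(3)] obtain K where K: "\<forall>k'\<ge>K. \<forall>m<n. 2 \<le> bsem f k' (m # xs)" by blast
  from mini(2) obtain k0 where k0: "\<forall>k'\<ge>k0. bsem f k' (n # xs) = Suc 0" by blast
  have "\<forall>k'\<ge>max (max K k0) (Suc n). bsem (Mini f) k' xs = Suc n"
  proof (intro allI impI)
    fix k' assume "max (max K k0) (Suc n) \<le> k'"
    then have "mfold (\<lambda>j. bsem f k' (j # xs)) k' = Suc (Suc n)"
      unfolding mfold_SS_iff using K k0 by auto
    then show "bsem (Mini f) k' xs = Suc n" by simp
  qed
  then show ?case by blast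
qed



lemma eval_C1': "eval C1 xs (Suc 0)" using eval_C1 by simp

primrec ALLNZ :: "recf list \<Rightarrow> recf" where
  "ALLNZ [] = C1"
| "ALLNZ (c # cs) = Comp IFZ [c, ALLNZ cs, Zero]"

lemma eval_ALLNZ: "list_all2 (\<lambda>c v. eval c xs v) cs vs \<Longrightarrow> eval (ALLNZ cs) xs (if 0 \<in> set vs then 0 else 1)"
proof (induction rule: list_all2_induct)
  case Nil then show ?case by (simp add: eval_C1')
next
  case (Cons c cs v vs)
  show ?case unfolding ALLNZ.simps
    by (rule eval_Comp3[OF Cons.hyps(1) Cons.IH eval_Zero[OF refl] eval_IFZ]) auto
qed

lemma projs: "length pre = c \<Longrightarrow>
  list_all2 (\<lambda>g y. eval g (pre @ ys) y) (map (\<lambda>i. Proj (i + c)) [0..<length ys]) ys"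
  unfolding list_all2_conv_all_nth
  by (auto intro!: eval_Proj simp: nth_append)

lemma projs1: "length ys = m \<Longrightarrow> list_all2 (\<lambda>g y. eval g (a # ys) y) (map (\<lambda>i. Proj (i + 1)) [0..<m]) ys"
  using projs[of "[a]" 1 ys] by simp
lemma projs2: "length ys = m \<Longrightarrow> list_all2 (\<lambda>g y. eval g (a # b # ys) y) (map (\<lambda>i. Proj (i + 2)) [0..<m]) ys"
  using projs[of "[a, b]" 2 ys] by simp
lemma projs3: "length ys = m \<Longrightarrow> list_all2 (\<lambda>g y. eval g (a # b # c # ys) y) (map (\<lambda>i. Proj (i + 3)) [0..<m]) ys"
  using projs[of "[a, b, c]" 3 ys] by simp

fun cmp :: "nat \<Rightarrow> recf \<Rightarrow> recf" where
  "cmp n Zero = C1"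
| "cmp n Succ = (if n = 0 then Zero else Comp Succ [Comp Succ [Proj 1]])"
| "cmp n (Proj i) = (if i < n then Comp Succ [Proj (Suc i)] else Zero)"
| "cmp n (Comp f gs) = Comp IFZ [ALLNZ (map (cmp n) gs),
     Comp (cmp (length gs) f) (Proj 0 # map (\<lambda>g. Comp PRED [cmp n g]) gs), Zero]"
| "cmp n (Prim g h) = (case n of 0 \<Rightarrow> Zero | Suc m \<Rightarrow>
     Comp (Prim (cmp m g) (Comp IFZ [Proj 1, Comp (cmp (Suc (Suc m)) h)
        (Proj 2 # Proj 0 # Comp PRED [Proj 1] # map (\<lambda>i. Proj (i + 3)) [0..<m]), Zero]))
       (Proj 1 # Proj 0 # map (\<lambda>i. Proj (i + 2)) [0..<m]))"
| "cmp n (Mini f) = Comp PRED [Comp (Prim Zero (Comp IFZ [Proj 1, Proj 1,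
      Comp IFZ [Comp (cmp (Suc n) f) (Proj 2 # Proj 0 # map (\<lambda>i. Proj (i + 3)) [0..<n]),
                Comp IFZ [Comp PRED [Comp (cmp (Suc n) f) (Proj 2 # Proj 0 # map (\<lambda>i. Proj (i + 3)) [0..<n])],
                          Zero, Comp Succ [Comp Succ [Proj 0]]],
                C1]]))
     (Proj 0 # Proj 0 # map (\<lambda>i. Proj (i + 1)) [0..<n])]"

lemma cmp_correct: "length xs = n \<Longrightarrow> eval (cmp n r) (k # xs) (bsem r k xs)"
proof (induction r arbitrary: n xs k)
  case Zero then show ?case by (simp add: eval_C1')
next
  case Succ
  show ?case
  proof (cases xs)
    case Nil then show ?thesis using Succ by (simp add: eval.zero)
  next
    case (Cons x xs')
    have "eval (Comp Succ [Comp Succ [Proj 1]]) (k # x # xs') (Suc (Suc x))"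
      by (rule eval_Succ1, rule eval_Succ1, rule eval_Proj) auto
    then show ?thesis using Succ Cons by simp
  qed
next
  case (Proj i)
  show ?case
  proof (cases "i < n")
    case True
    have "eval (Comp Succ [Proj (Suc i)]) (k # xs) (Suc (xs ! i))"
      by (rule eval_Succ1, rule eval_Proj) (use True Proj in auto)
    then show ?thesis using True Proj by simp
  next
    case False then show ?thesis using Proj by (simp add: eval.zero)
  qed
next
  case (Comp f gs)
  have vs: "list_all2 (\<lambda>c v. eval c (k # xs) v) (map (cmp n) gs) (map (\<lambda>g. bsem g k xs) gs)"
    unfolding list_all2_map1 list_all2_map2 list_all2_same using Comp.IH(2) Comp.prems by blast
  have l: "list_all2 (\<lambda>g y. eval g (k # xs) y) (map (\<lambda>g. Comp PRED [cmp n g]) gs) (map (\<lambda>g. bsem g k xs - 1) gs)"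
    unfolding list_all2_map1 list_all2_map2 list_all2_same
    using Comp.IH(2) Comp.prems by (blast intro: eval_Comp1[OF _ eval_PRED[OF refl]])
  have body: "eval (Comp (cmp (length gs) f) (Proj 0 # map (\<lambda>g. Comp PRED [cmp n g]) gs)) (k # xs)
      (bsem f k (map (\<lambda>g. bsem g k xs - 1) gs))"
    by (rule eval.comp[where ys = "k # map (\<lambda>g. bsem g k xs - 1) gs"])
      (use l Comp.IH(1) in \<open>auto intro: eval_Proj\<close>)
  have e: "0 \<in> set (map (\<lambda>g. bsem g k xs) gs) \<longleftrightarrow> (\<exists>g\<in>set gs. bsem g k xs = 0)" by auto
  show ?case unfolding cmp.simps
    by (rule eval_Comp3[OF eval_ALLNZ[OF vs] body eval_Zero[OF refl] eval_IFZ])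
      (auto simp: bsem_Comp_eq image_iff)
next
  case (Prim g h)
  show ?case
  proof (cases n)
    case 0 then show ?thesis using Prim.prems by (simp add: eval.zero)
  next
    case (Suc m)
    then obtain c ys where xs: "xs = c # ys" and ly: "length ys = m" using Prim.prems by (cases xs) auto
    let ?H = "Comp IFZ [Proj 1, Comp (cmp (Suc (Suc m)) h)
        (Proj 2 # Proj 0 # Comp PRED [Proj 1] # map (\<lambda>i. Proj (i + 3)) [0..<m]), Zero]"
    have P: "eval (Prim (cmp m g) ?H) (c # k # ys) (pfold (\<lambda>j w. bsem h k (j # w # ys)) (bsem g k ys) c)" for c
    proof (induction c)
      case 0 then show ?case using Prim.IH(1) ly by (auto intro: eval.prim0)
    next
      case (Suc c)
      define v where "v = pfold (\<lambda>j w. bsem h k (j # w # ys)) (bsem g k ys) c"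
      have l3: "list_all2 (\<lambda>g y. eval g (c # v # k # ys) y)
          (Proj 2 # Proj 0 # Comp PRED [Proj 1] # map (\<lambda>i. Proj (i + 3)) [0..<m]) (k # c # (v - 1) # ys)"
      proof -
        have pr: "eval (Comp PRED [Proj 1]) (c # v # k # ys) (v - 1)"
          by (rule eval_Comp1[OF eval_Proj[of 1 _ v] eval_PRED]) auto
        show ?thesis using projs3[OF ly, of c v k] pr by (auto intro!: eval_Proj)
      qed
      have bd: "eval (Comp (cmp (Suc (Suc m)) h)
        (Proj 2 # Proj 0 # Comp PRED [Proj 1] # map (\<lambda>i. Proj (i + 3)) [0..<m])) (c # v # k # ys)
        (bsem h k (c # (v - 1) # ys))"
        by (rule eval.comp[OF l3]) (use Prim.IH(2) ly in auto)
      have "eval ?H (c # v # k # ys) (pfold (\<lambda>j w. bsem h k (j # w # ys)) (bsem g k ys) (Suc c))"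
        by (rule eval_Comp3[OF eval_Proj bd eval_Zero[OF refl] eval_IFZ]) (auto simp: v_def)
      then show ?case using eval.primS[OF Suc.IH[folded v_def]] by (simp add: v_def)
    qed
    have l2: "list_all2 (\<lambda>g y. eval g (k # c # ys) y)
        (Proj 1 # Proj 0 # map (\<lambda>i. Proj (i + 2)) [0..<m]) (c # k # ys)"
      using projs2[OF ly, of k c] by (auto intro!: eval_Proj)
    have "eval (cmp n (Prim g h)) (k # c # ys) (pfold (\<lambda>j w. bsem h k (j # w # ys)) (bsem g k ys) c)"
      unfolding Suc cmp.simps nat.case by (rule eval.comp[OF l2 P])
    then show ?thesis using xs by simp
  qed
next
  case (Mini f)
  let ?V = "Comp (cmp (Suc n) f) (Proj 2 # Proj 0 # map (\<lambda>i. Proj (i + 3)) [0..<n])"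
  let ?W = "Comp IFZ [?V, Comp IFZ [Comp PRED [?V], Zero, Comp Succ [Comp Succ [Proj 0]]], C1]"
  let ?HM = "Comp IFZ [Proj 1, Proj 1, ?W]"
  let ?\<phi> = "\<lambda>j. bsem f k (j # xs)"
  have V: "eval ?V (c # s # k # xs) (?\<phi> c)" for c s
    by (rule eval.comp[where ys = "k # c # xs"])
      (use projs3[OF Mini.prems, of c s k] Mini.IH Mini.prems in \<open>auto intro!: eval_Proj\<close>)
  have W: "eval ?W (c # s # k # xs) (if ?\<phi> c = 0 then 1 else if ?\<phi> c - 1 = 0 then Suc (Suc c) else 0)" for c s
  proof -
    have i: "eval (Comp IFZ [Comp PRED [?V], Zero, Comp Succ [Comp Succ [Proj 0]]]) (c # s # k # xs)
       (if ?\<phi> c - 1 = 0 then Suc (Suc c) else 0)"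
      by (rule eval_Comp3[OF eval_Comp1[OF V eval_PRED[OF refl]] eval_Zero[OF refl]
            eval_Succ1[OF eval_Succ1[OF eval_Proj]] eval_IFZ]) auto
    show ?thesis by (rule eval_Comp3[OF V i eval_C1 eval_IFZ]) simp
  qed
  have M: "eval (Prim Zero ?HM) (c # k # xs) (mfold ?\<phi> c)" for c
  proof (induction c)
    case 0 then show ?case by (auto intro: eval.prim0 eval.zero)
  next
    case (Suc c)
    have "eval ?HM (c # mfold ?\<phi> c # k # xs) (mfold ?\<phi> (Suc c))"
      by (rule eval_Comp3[OF eval_Proj eval_Proj W eval_IFZ]) auto
    then show ?case by (rule eval.primS[OF Suc.IH])
  qed
  have l: "list_all2 (\<lambda>g y. eval g (k # xs) y) (Proj 0 # Proj 0 # map (\<lambda>i. Proj (i + 1)) [0..<n]) (k # k # xs)"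
    using projs1[OF Mini.prems, of k] by (auto intro!: eval_Proj)
  show ?case unfolding cmp.simps
    by (rule eval_Comp1[OF eval.comp[OF l M] eval_PRED]) simp
qed



definition greatest :: "('d \<Rightarrow> 'd \<Rightarrow> bool) \<Rightarrow> 'd set \<Rightarrow> 'd \<Rightarrow> bool" where
  "greatest lt S m \<longleftrightarrow> m \<in> S \<and> (\<forall>d\<in>S. d = m \<or> lt d m)"

lemma chain_max:
  assumes "transp lt" "finite A" "A \<noteq> {}" "\<forall>u\<in>A. \<forall>v\<in>A. u = v \<or> lt u v \<or> lt v u"
  shows "\<exists>m\<in>A. \<forall>d\<in>A. d = m \<or> lt d m"
  using assms(2,3,4)
proof (induction A rule: finite_ne_induct)
  case (singleton x) then show ?case by simp
next
  case (insert x F)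
  then obtain m where m: "m \<in> F" "\<forall>d\<in>F. d = m \<or> lt d m" by auto
  from insert.prems m(1) have "x = m \<or> lt x m \<or> lt m x" by auto
  then show ?case
  proof (elim disjE)
    assume "x = m" then show ?thesis using m by auto
  next
    assume "lt x m" then show ?thesis using m by auto
  next
    assume xm: "lt m x"
    have "\<forall>d\<in>insert x F. d = x \<or> lt d x"
      using m xm assms(1) by (auto dest: transpD)
    then show ?thesis by auto
  qed
qed

lemma maxD_eq:
  assumes irr: "irreflp lt" and tr: "transp lt"
    and ch: "\<forall>s t u v. s \<le> t \<longrightarrow> a s = Some u \<longrightarrow> a t = Some v \<longrightarrow> u = v \<or> lt u v"
    and sub: "\<forall>t d. b t = Some d \<longrightarrow> (\<exists>s. a s = Some d)"
    and cof: "\<forall>s d. a s = Some d \<longrightarrow> (\<exists>t d'. b t = Some d' \<and> (d = d' \<or> lt d d'))"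
  shows "maxD lt (\<lambda>_. b) x = maxD lt (\<lambda>_. a) x"
proof -
  define S where "S = {d. \<exists>t. a t = Some d}"
  define S' where "S' = {d. \<exists>t. b t = Some d}"
  have SS: "S' \<subseteq> S" using sub unfolding S_def S'_def by auto
  have lle: "lt u v \<Longrightarrow> lt v w \<Longrightarrow> lt u w" for u v w using tr by (meson transpD)
  have nlt: "\<not> (lt u v \<and> lt v u)" for u v using irr lle by (metis irreflp_def)
  have chS: "\<forall>u\<in>S. \<forall>v\<in>S. u = v \<or> lt u v \<or> lt v u"
  proof (intro ballI)
    fix u v assume "u \<in> S" "v \<in> S"
    then obtain s t where "a s = Some u" "a t = Some v" unfolding S_def by auto
    then show "u = v \<or> lt u v \<or> lt v u" using ch nat_le_linear[of s t] by blast
  qed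
  have cofS: "\<forall>d\<in>S. \<exists>d'\<in>S'. d = d' \<or> lt d d'" using cof unfolding S_def S'_def by blast
  have g1: "greatest lt S' m \<Longrightarrow> greatest lt S m" for m
  proof -
    assume g: "greatest lt S' m"
    show "greatest lt S m" unfolding greatest_def
    proof (intro conjI ballI)
      show "m \<in> S" using g SS unfolding greatest_def by blast
      fix d assume "d \<in> S"
      then obtain d' where d': "d' \<in> S'" "d = d' \<or> lt d d'" using cofS by blast
      have "d' = m \<or> lt d' m" using g d'(1) unfolding greatest_def by blast
      then show "d = m \<or> lt d m" using d'(2) lle by blast
    qed
  qed
  have g2: "greatest lt S m \<Longrightarrow> greatest lt S' m" for m
  proof -
    assume g: "greatest lt S m"
    then obtain d' where d': "d' \<in> S'" "m = d' \<or> lt m d'" using cofS unfolding greatest_def by blast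
    then have "d' = m \<or> lt d' m" using g SS unfolding greatest_def by blast
    then have "d' = m" using d' nlt by blast
    then show "greatest lt S' m" using g d' SS unfolding greatest_def by blast
  qed
  have fin: "finite S' \<and> S' \<noteq> {} \<longleftrightarrow> finite S \<and> S \<noteq> {}"
  proof
    assume h: "finite S' \<and> S' \<noteq> {}"
    have "\<forall>u\<in>S'. \<forall>v\<in>S'. u = v \<or> lt u v \<or> lt v u" using chS SS by blast
    then obtain m where m: "m \<in> S'" "\<forall>d\<in>S'. d = m \<or> lt d m" using chain_max[OF tr] h by blast
    then have gm: "greatest lt S m" using g1 unfolding greatest_def by blast
    from m(1) obtain s' where s': "a s' = Some m" using sub unfolding S'_def by blast
    have "S \<subseteq> insert m ((\<lambda>s. the (a s)) ` {..<s'})"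
    proof
      fix d assume "d \<in> S"
      then obtain s where s: "a s = Some d" unfolding S_def by blast
      show "d \<in> insert m ((\<lambda>s. the (a s)) ` {..<s'})"
      proof (cases "s < s'")
        case True then show ?thesis using s by (auto intro: image_eqI[of _ _ s])
      next
        case False
        then have "s' \<le> s" by simp
        then have "m = d \<or> lt m d" using ch s s' by blast
        moreover have "d = m \<or> lt d m" using gm \<open>d \<in> S\<close> unfolding greatest_def by blast
        ultimately have "d = m" using nlt by blast
        then show ?thesis by simp
      qed
    qed
    then have "finite S" by (rule finite_subset) simp
    moreover have "S \<noteq> {}" using h SS by blast
    ultimately show "finite S \<and> S \<noteq> {}" by simp
  next
    assume h: "finite S \<and> S \<noteq> {}"
    then have "finite S'" using SS finite_subset by blast
    moreover have "S' \<noteq> {}" using h cofS by blast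
    ultimately show "finite S' \<and> S' \<noteq> {}" by simp
  qed
  have th: "(THE m. m \<in> S' \<and> (\<forall>d\<in>S'. d = m \<or> lt d m)) = (THE m. m \<in> S \<and> (\<forall>d\<in>S. d = m \<or> lt d m))"
  proof -
    have "(\<lambda>m. m \<in> S' \<and> (\<forall>d\<in>S'. d = m \<or> lt d m)) = (\<lambda>m. m \<in> S \<and> (\<forall>d\<in>S. d = m \<or> lt d m))"
      using g1 g2 unfolding greatest_def by (intro ext iffI) blast+
    then show ?thesis by simp
  qed
  show ?thesis unfolding maxD_def Let_def S_def[symmetric] S'_def[symmetric]
    using fin th by simp
qed

lemma maxD_cong: "(\<forall>t. f x t = g x t) \<Longrightarrow> maxD lt f x = maxD lt g x"
  unfolding maxD_def by simp

lemma maxD_None: "(\<forall>t. f x t = None) \<Longrightarrow> maxD lt f x = None"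
  unfolding maxD_def by simp

lemma maxD_Some_ex: "maxD lt f x \<noteq> None \<Longrightarrow> \<exists>t. f x t \<noteq> None"
  unfolding maxD_def Let_def by (auto split: if_splits)



section \<open>Decoding pairs\<close>

lemma tri_mono: "m \<le> n \<Longrightarrow> triangle m \<le> triangle n"
  by (induction n rule: dec_induct) auto

definition "DG = Comp IFZ [Comp SUB2 [Comp TRI [Comp Succ [Proj 0]], Proj 1], Zero, C1]"
definition "DD = Mini DG"
definition "FSTr = Comp SUB2 [Proj 0, Comp TRI [DD]]"
definition "SNDr = Comp SUB2 [DD, FSTr]"

lemma eval_DG: "eval DG [d, z] (if triangle (Suc d) \<le> z then 1 else 0)"
proof -
  have 1: "eval (Comp TRI [Comp Succ [Proj 0]]) [d, z] (triangle (Suc d))"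
    by (rule eval_Comp1[OF eval_Succ1[OF eval_Proj[of 0 _ d]] eval_TRI]) auto
  have 2: "eval (Comp SUB2 [Comp TRI [Comp Succ [Proj 0]], Proj 1]) [d, z] (triangle (Suc d) - z)"
    by (rule eval_Comp2[OF 1 eval_Proj[of 1 _ z] eval_SUB2]) auto
  show ?thesis unfolding DG_def
    by (rule eval_Comp3[OF 2 eval_Zero[OF refl] eval_C1 eval_IFZ]) auto
qed

lemma eval_DD: "eval DD [prod_encode (a, b)] (a + b)"
  unfolding DD_def
proof (rule eval.mini)
  have "\<not> triangle (Suc (a + b)) \<le> prod_encode (a, b)" by (simp add: prod_encode_def)
  then show "eval DG [a + b, prod_encode (a, b)] 0" using eval_DG[of "a + b" "prod_encode (a, b)"] by simp
  show "\<forall>m<a + b. \<exists>y>0. eval DG [m, prod_encode (a, b)] y"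
  proof (intro allI impI)
    fix m assume "m < a + b"
    then have "triangle (Suc m) \<le> triangle (a + b)" by (intro tri_mono) simp
    then have "triangle (Suc m) \<le> prod_encode (a, b)" by (simp add: prod_encode_def)
    then show "\<exists>y>0. eval DG [m, prod_encode (a, b)] y" using eval_DG[of m "prod_encode (a, b)"] by auto
  qed
qed

lemma eval_FSTr: "eval FSTr [prod_encode (a, b)] a"
  unfolding FSTr_def
  by (rule eval_Comp2[OF eval_Proj eval_Comp1[OF eval_DD eval_TRI[OF refl]] eval_SUB2])
    (auto simp: prod_encode_def)

lemma eval_SNDr: "eval SNDr [prod_encode (a, b)] b"
  unfolding SNDr_def
  by (rule eval_Comp2[OF eval_DD eval_FSTr eval_SUB2]) auto

section \<open>The stage search\<close>

definition BB :: "recf \<Rightarrow> nat \<Rightarrow> nat \<Rightarrow> nat" where "BB r K z = bsem r K [z]"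

primrec lf :: "recf \<Rightarrow> nat \<Rightarrow> nat \<Rightarrow> nat \<Rightarrow> nat" where
  "lf r e K 0 = BB r K (prod_encode (e, 0))"
| "lf r e K (Suc s) = (if BB r K (prod_encode (e, Suc s)) = 0 then lf r e K s else BB r K (prod_encode (e, Suc s)))"

definition LL :: "recf \<Rightarrow> nat \<Rightarrow> nat \<Rightarrow> nat" where "LL r e K = lf r e K K"

lemma lf_zero: "lf r e K s = 0 \<longleftrightarrow> (\<forall>s'\<le>s. BB r K (prod_encode (e, s')) = 0)"
  by (induction s) (auto simp: le_Suc_eq)

lemma lf_pos: "lf r e K s \<noteq> 0 \<Longrightarrow> \<exists>s'\<le>s. lf r e K s = BB r K (prod_encode (e, s')) \<and>
   (\<forall>s''. s' < s'' \<and> s'' \<le> s \<longrightarrow> BB r K (prod_encode (e, s'')) = 0)"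
proof (induction s)
  case 0 then show ?case by auto
next
  case (Suc s)
  show ?case
  proof (cases "BB r K (prod_encode (e, Suc s)) = 0")
    case True
    with Suc.prems have "lf r e K s \<noteq> 0" by simp
    from Suc.IH[OF this] obtain s' where "s' \<le> s" "lf r e K s = BB r K (prod_encode (e, s'))"
      "\<forall>s''. s' < s'' \<and> s'' \<le> s \<longrightarrow> BB r K (prod_encode (e, s'')) = 0" by blast
    then show ?thesis using True by (intro exI[of _ s']) (auto simp: le_Suc_eq)
  next
    case False then show ?thesis by (intro exI[of _ "Suc s"]) auto
  qed
qed

definition "CR r = cmp 1 r"

lemma eval_CR: "eval (CR r) [K, z] (BB r K z)"
  unfolding CR_def BB_def using cmp_correct[of "[z]" 1 r K] by simp

definition "LG r = Comp (CR r) [Proj 1, Comp PE [Proj 0, Zero]]"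
definition "VV r = Comp (CR r) [Proj 3, Comp PE [Proj 2, Comp Succ [Proj 0]]]"
definition "LH r = Comp IFZ [VV r, VV r, Proj 1]"
definition "LLp r = Comp (Prim (LG r) (LH r)) [Proj 1, Proj 0, Proj 1]"
definition "GG r = Comp IFZ [Comp (LLp r) [Proj 1, Proj 0], Zero, C1]"
definition "MG r = Mini (GG r)"

lemma eval_lf: "eval (Prim (LG r) (LH r)) [s, e, K] (lf r e K s)"
proof (induction s)
  case 0
  have "eval (LG r) [e, K] (BB r K (prod_encode (e, 0)))"
    unfolding LG_def
    by (rule eval_Comp2[OF eval_Proj[of 1 _ K] eval_Comp2[OF eval_Proj[of 0 _ e] eval_Zero[OF refl] eval_PE[OF refl]] eval_CR])
      auto
  then show ?case by (auto intro: eval.prim0)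
next
  case (Suc s)
  have v: "eval (VV r) [s, w, e, K] (BB r K (prod_encode (e, Suc s)))" for w
    unfolding VV_def
    by (rule eval_Comp2[OF eval_Proj[of 3 _ K] eval_Comp2[OF eval_Proj[of 2 _ e] eval_Succ1[OF eval_Proj[of 0 _ s]] eval_PE[OF refl]] eval_CR])
      auto
  have "eval (LH r) [s, lf r e K s, e, K] (lf r e K (Suc s))"
    unfolding LH_def
    by (rule eval_Comp3[OF v v eval_Proj[of 1 _ "lf r e K s"] eval_IFZ]) auto
  then show ?case by (rule eval.primS[OF Suc])
qed

lemma eval_LLp: "eval (LLp r) [e, K] (LL r e K)"
  unfolding LLp_def LL_def
  by (rule eval.comp[where ys = "[K, e, K]"]) (auto intro: eval_Proj eval_lf)

lemma eval_GG: "eval (GG r) [j, e] (if LL r e j = 0 then 1 else 0)"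
proof -
  have "eval (Comp (LLp r) [Proj 1, Proj 0]) [j, e] (LL r e j)"
    by (rule eval_Comp2[OF eval_Proj[of 1 _ e] eval_Proj[of 0 _ j] eval_LLp]) auto
  then show ?thesis unfolding GG_def
    by (rule eval_Comp3[OF _ eval_Zero[OF refl] eval_C1 eval_IFZ]) auto
qed

lemma eval_MG_iff: "eval (MG r) [e] y \<longleftrightarrow> (\<exists>j. LL r e j \<noteq> 0) \<and> y = (LEAST j. LL r e j \<noteq> 0)"
proof
  assume "eval (MG r) [e] y"
  then have a: "eval (GG r) [y, e] 0" and b: "\<forall>m<y. \<exists>z>0. eval (GG r) [m, e] z"
    unfolding MG_def by (auto elim: evMiniE)
  from a have y: "LL r e y \<noteq> 0" using eval_det[OF a eval_GG] by (auto split: if_splits)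
  have "\<forall>m<y. LL r e m = 0"
  proof (intro allI impI)
    fix m assume "m < y"
    with b obtain z where z: "z > 0" "eval (GG r) [m, e] z" by blast
    then have "z = (if LL r e m = 0 then 1 else 0)" using eval_det[OF z(2) eval_GG] by simp
    then show "LL r e m = 0" using z(1) by (auto split: if_splits)
  qed
  then show "(\<exists>j. LL r e j \<noteq> 0) \<and> y = (LEAST j. LL r e j \<noteq> 0)"
    using y by (metis (mono_tags, lifting) LeastI_ex Least_le le_neq_implies_less)
next
  assume h: "(\<exists>j. LL r e j \<noteq> 0) \<and> y = (LEAST j. LL r e j \<noteq> 0)"
  then have y: "LL r e y \<noteq> 0" by (metis (mono_tags, lifting) LeastI_ex)
  have z: "\<forall>m<y. LL r e m = 0" using h not_less_Least by blast
  have "\<forall>m<y. \<exists>z>0. eval (GG r) [m, e] z"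
  proof (intro allI impI)
    fix m assume "m < y"
    then show "\<exists>z>0. eval (GG r) [m, e] z" using z eval_GG[of r m e] by (intro exI[of _ 1]) auto
  qed
  then show "eval (MG r) [e] y" unfolding MG_def
    using y eval_GG[of r y e] by (intro eval.mini) auto
qed

definition "RR r = Comp PRED [Comp (LLp r) [FSTr, Comp ADD [Comp (MG r) [FSTr], SNDr]]]"

lemma eval_RR: assumes "\<exists>j. LL r e j \<noteq> 0"
  shows "eval (RR r) [prod_encode (e, t)] (LL r e ((LEAST j. LL r e j \<noteq> 0) + t) - 1)"
proof -
  have m: "eval (MG r) [e] (LEAST j. LL r e j \<noteq> 0)" using assms eval_MG_iff by blast
  have a: "eval (Comp ADD [Comp (MG r) [FSTr], SNDr]) [prod_encode (e, t)] ((LEAST j. LL r e j \<noteq> 0) + t)"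
    by (rule eval_Comp2[OF eval_Comp1[OF eval_FSTr m] eval_SNDr eval_ADD[OF refl]])
  show ?thesis unfolding RR_def
    by (rule eval_Comp1[OF eval_Comp2[OF eval_FSTr a eval_LLp] eval_PRED[OF refl]])
qed

lemma evComp_arg: "eval (Comp f gs) xs y \<Longrightarrow> g \<in> set gs \<Longrightarrow> \<exists>v. eval g xs v"
  by (erule evCompE) (metis in_set_conv_nth list_all2_conv_all_nth)

lemma evComp1_arg: "eval (Comp f [g]) xs y \<Longrightarrow> \<exists>v. eval g xs v \<and> eval f [v] y"
  by (erule evCompE) (auto simp: list_all2_Cons1)

lemma eval_RR_dom: assumes "eval (RR r) [prod_encode (e, t)] y" shows "\<exists>j. LL r e j \<noteq> 0"
proof -
  let ?z = "[prod_encode (e, t)]"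
  from assms obtain w where "eval (Comp (LLp r) [FSTr, Comp ADD [Comp (MG r) [FSTr], SNDr]]) ?z w"
    unfolding RR_def using evComp1_arg by blast
  then obtain v where "eval (Comp ADD [Comp (MG r) [FSTr], SNDr]) ?z v"
    using evComp_arg by (metis list.set_intros(1) list.set_intros(2))
  then obtain u where "eval (Comp (MG r) [FSTr]) ?z u"
    using evComp_arg by (metis list.set_intros(1))
  then obtain e' where "eval FSTr ?z e'" "eval (MG r) [e'] u" using evComp1_arg by blast
  then have "eval (MG r) [e] u" using eval_det[OF _ eval_FSTr] by metis
  then show ?thesis using eval_MG_iff by blast
qed

lemma eval_RR_iff: "eval (RR r) [prod_encode (e, t)] y \<longleftrightarrow>
   (\<exists>j. LL r e j \<noteq> 0) \<and> y = LL r e ((LEAST j. LL r e j \<noteq> 0) + t) - 1"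
  using eval_RR eval_RR_dom eval_det by metis



lemma BB_mono: "BB r K z = Suc y \<Longrightarrow> K \<le> K' \<Longrightarrow> BB r K' z = Suc y"
  unfolding BB_def by (rule bsem_mono)

lemma LL_nz_of: assumes "s \<le> K" "BB r K (prod_encode (e, s)) \<noteq> 0" shows "LL r e K \<noteq> 0"
proof
  assume "LL r e K = 0"
  then have "\<forall>s'\<le>K. BB r K (prod_encode (e, s')) = 0" unfolding LL_def by (rule lf_zero[THEN iffD1])
  then have "BB r K (prod_encode (e, s)) = 0" using assms(1) by blast
  with assms(2) show False by contradiction
qed

lemma LL_mono: assumes "LL r e K \<noteq> 0" "K \<le> K'" shows "LL r e K' \<noteq> 0"
proof -
  from lf_pos[of r e K K] assms(1) obtain s where s: "s \<le> K" "BB r K (prod_encode (e, s)) \<noteq> 0"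
    unfolding LL_def by auto
  then obtain y where "BB r K (prod_encode (e, s)) = Suc y" using not0_implies_Suc by blast
  then have "BB r K' (prod_encode (e, s)) = Suc y" using assms(2) by (rule BB_mono)
  then have "BB r K' (prod_encode (e, s)) \<noteq> 0" by simp
  moreover have "s \<le> K'" using s(1) assms(2) by simp
  ultimately show ?thesis by (intro LL_nz_of)
qed

lemma stage:
  assumes H1: "\<forall>t y. eval r [prod_encode (e, t)] y \<longleftrightarrow> a t = Some (\<rho> y)"
    and L: "LL r e K \<noteq> 0"
  shows "\<exists>s y. s \<le> K \<and> LL r e K = Suc y \<and> BB r K (prod_encode (e, s)) = Suc y \<and> a s = Some (\<rho> y)
     \<and> (\<forall>s''. s < s'' \<and> s'' \<le> K \<longrightarrow> BB r K (prod_encode (e, s'')) = 0)"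
proof -
  from lf_pos[of r e K K] L obtain s where s: "s \<le> K" "LL r e K = BB r K (prod_encode (e, s))"
    "\<forall>s''. s < s'' \<and> s'' \<le> K \<longrightarrow> BB r K (prod_encode (e, s'')) = 0"
    unfolding LL_def by auto
  obtain y where y: "LL r e K = Suc y" using L not0_implies_Suc by blast
  then have "bsem r K [prod_encode (e, s)] = Suc y" using s(2) unfolding BB_def by simp
  then have "eval r [prod_encode (e, s)] y" by (rule bsem_sound)
  then have "a s = Some (\<rho> y)" by (simp add: H1)
  then show ?thesis using s y by (intro exI[of _ s] exI[of _ y]) auto
qed

lemma sem:
  assumes H1: "\<forall>t y. eval r [prod_encode (e, t)] y \<longleftrightarrow> a t = Some (\<rho> y)"
    and H2: "\<forall>s t u v. s \<le> t \<longrightarrow> a s = Some u \<longrightarrow> a t = Some v \<longrightarrow> u = v \<or> lt u v"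
    and sj: "surj \<rho>"
    and b: "b = (\<lambda>t. if \<exists>j. LL r e j \<noteq> 0 then Some (\<rho> (LL r e ((LEAST j. LL r e j \<noteq> 0) + t) - 1)) else None)"
  shows "(\<exists>j. LL r e j \<noteq> 0) \<longleftrightarrow> (\<exists>s. a s \<noteq> None)"
    and "\<forall>t d. b t = Some d \<longrightarrow> (\<exists>s. a s = Some d)"
    and "\<forall>s t u v. s \<le> t \<longrightarrow> b s = Some u \<longrightarrow> b t = Some v \<longrightarrow> u = v \<or> lt u v"
    and "\<forall>s d. a s = Some d \<longrightarrow> (\<exists>t d'. b t = Some d' \<and> (d = d' \<or> lt d d'))"
proof -
  define N where "N = (LEAST j. LL r e j \<noteq> 0)"
  have NL: "(\<exists>j. LL r e j \<noteq> 0) \<Longrightarrow> LL r e (N + t) \<noteq> 0" for t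
  proof -
    assume ex: "\<exists>j. LL r e j \<noteq> 0"
    have "LL r e N \<noteq> 0" unfolding N_def using LeastI_ex[of "\<lambda>j. LL r e j \<noteq> 0"] ex by blast
    then show "LL r e (N + t) \<noteq> 0" using LL_mono le_add1 by blast
  qed
  have bt: "(\<exists>j. LL r e j \<noteq> 0) \<Longrightarrow> b t = Some (\<rho> (LL r e (N + t) - 1))" for t
    unfolding b N_def by simp
  show cof: "\<forall>s d. a s = Some d \<longrightarrow> (\<exists>t d'. b t = Some d' \<and> (d = d' \<or> lt d d'))"
  proof (intro allI impI)
    fix s d assume as: "a s = Some d"
    obtain y where d: "d = \<rho> y" using surjD[OF sj, of d] by blast
    have "eval r [prod_encode (e, s)] y" using H1 as d by simp
    from bsem_complete[OF this] obtain k where k: "\<forall>k'\<ge>k. BB r k' (prod_encode (e, s)) = Suc y"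
      unfolding BB_def by blast
    have "LL r e (max k s) \<noteq> 0" using LL_nz_of[of s "max k s" r e] k by simp
    then have ex: "\<exists>j. LL r e j \<noteq> 0" by blast
    define K2 where "K2 = N + max k s"
    have L2: "LL r e K2 \<noteq> 0" using NL[OF ex] K2_def by simp
    from stage[OF H1 L2] obtain s2 y2 where st: "s2 \<le> K2" "LL r e K2 = Suc y2"
      "a s2 = Some (\<rho> y2)" "\<forall>s''. s2 < s'' \<and> s'' \<le> K2 \<longrightarrow> BB r K2 (prod_encode (e, s'')) = 0" by blast
    have bs: "BB r K2 (prod_encode (e, s)) = Suc y" using k K2_def by simp
    have "s \<le> s2"
    proof (rule ccontr)
      assume "\<not> s \<le> s2"
      then have "s2 < s" "s \<le> K2" using K2_def by auto
      then have "BB r K2 (prod_encode (e, s)) = 0" using st(4) by blast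
      with bs show False by simp
    qed
    then have "d = \<rho> y2 \<or> lt d (\<rho> y2)" using H2 as st(3) by blast
    moreover have "b (max k s) = Some (\<rho> y2)" using bt[OF ex] st(2) K2_def by simp
    ultimately show "\<exists>t d'. b t = Some d' \<and> (d = d' \<or> lt d d')" by blast
  qed
  show "(\<exists>j. LL r e j \<noteq> 0) \<longleftrightarrow> (\<exists>s. a s \<noteq> None)"
  proof
    assume "\<exists>j. LL r e j \<noteq> 0"
    then obtain j where "LL r e j \<noteq> 0" by blast
    from stage[OF H1 this] show "\<exists>s. a s \<noteq> None" by blast
  next
    assume "\<exists>s. a s \<noteq> None"
    then obtain s d where "a s = Some d" by blast
    with cof obtain t d' where "b t = Some d'" by blast
    then show "\<exists>j. LL r e j \<noteq> 0" unfolding b by (auto split: if_splits)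
  qed
  show "\<forall>t d. b t = Some d \<longrightarrow> (\<exists>s. a s = Some d)"
  proof (intro allI impI)
    fix t d assume bd: "b t = Some d"
    then have ex: "\<exists>j. LL r e j \<noteq> 0" unfolding b by (auto split: if_splits)
    from stage[OF H1 NL[OF ex, of t]] obtain s y where "LL r e (N + t) = Suc y" "a s = Some (\<rho> y)" by blast
    then show "\<exists>s. a s = Some d" using bd bt[OF ex] by auto
  qed
  show "\<forall>s t u v. s \<le> t \<longrightarrow> b s = Some u \<longrightarrow> b t = Some v \<longrightarrow> u = v \<or> lt u v"
  proof (intro allI impI)
    fix t1 t2 u v assume t12: "t1 \<le> t2" and bu: "b t1 = Some u" and bv: "b t2 = Some v"
    then have ex: "\<exists>j. LL r e j \<noteq> 0" unfolding b by (auto split: if_splits)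
    from stage[OF H1 NL[OF ex, of t1]] obtain s1 y1 where s1: "s1 \<le> N + t1" "LL r e (N + t1) = Suc y1"
      "BB r (N + t1) (prod_encode (e, s1)) = Suc y1" "a s1 = Some (\<rho> y1)" by blast
    from stage[OF H1 NL[OF ex, of t2]] obtain s2 y2 where s2: "s2 \<le> N + t2" "LL r e (N + t2) = Suc y2"
      "a s2 = Some (\<rho> y2)" "\<forall>s''. s2 < s'' \<and> s'' \<le> N + t2 \<longrightarrow> BB r (N + t2) (prod_encode (e, s'')) = 0"
      by blast
    have bs: "BB r (N + t2) (prod_encode (e, s1)) = Suc y1" using BB_mono[OF s1(3)] t12 by simp
    have "s1 \<le> s2"
    proof (rule ccontr)
      assume "\<not> s1 \<le> s2"
      then have "s2 < s1" "s1 \<le> N + t2" using s1(1) t12 by auto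
      then have "BB r (N + t2) (prod_encode (e, s1)) = 0" using s2(4) by blast
      with bs show False by simp
    qed
    then have "\<rho> y1 = \<rho> y2 \<or> lt (\<rho> y1) (\<rho> y2)" using H2 s1(4) s2(3) by blast
    moreover have "u = \<rho> y1" using bu bt[OF ex] s1(2) by simp
    moreover have "v = \<rho> y2" using bv bt[OF ex] s2(2) by simp
    ultimately show "u = v \<or> lt u v" by simp
  qed
qed



lemma eval_R2_iff:
  "eval (Comp (Proj 1) [Comp rF [FSTr], R]) [prod_encode (e, t)] y \<longleftrightarrow>
   (\<exists>w. eval rF [e] w) \<and> eval R [prod_encode (e, t)] y"
proof
  assume h: "eval (Comp (Proj 1) [Comp rF [FSTr], R]) [prod_encode (e, t)] y"
  then obtain ys where l: "list_all2 (\<lambda>g. eval g [prod_encode (e, t)]) [Comp rF [FSTr], R] ys"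
    and p: "eval (Proj 1) ys y" by (rule evCompE)
  from l obtain v1 v2 where ys: "ys = [v1, v2]" and e1: "eval (Comp rF [FSTr]) [prod_encode (e, t)] v1"
    and e2: "eval R [prod_encode (e, t)] v2"
    by (auto simp: list_all2_Cons1)
  from p ys have "y = v2" by (auto elim: evProjE)
  moreover from evComp1_arg[OF e1] obtain e' where "eval FSTr [prod_encode (e, t)] e'" "eval rF [e'] v1" by blast
  then have "eval rF [e] v1" using eval_det[OF _ eval_FSTr] by metis
  ultimately show "(\<exists>w. eval rF [e] w) \<and> eval R [prod_encode (e, t)] y" using e2 by blast
next
  assume "(\<exists>w. eval rF [e] w) \<and> eval R [prod_encode (e, t)] y"
  then obtain w where w: "eval rF [e] w" and r: "eval R [prod_encode (e, t)] y" by blast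
  show "eval (Comp (Proj 1) [Comp rF [FSTr], R]) [prod_encode (e, t)] y"
    by (rule eval_Comp2[OF eval_Comp1[OF eval_FSTr w] r eval_Proj]) auto
qed

theorem mainTheorem14:
  fixes X :: bspace and lt :: "'d \<Rightarrow> 'd \<Rightarrow> bool" and \<rho> :: "nat \<Rightarrow> 'd"
    and F :: "val \<Rightarrow> 'd option"
  assumes "irreflp lt" and "transp lt" and "bij \<rho>" and "computable_order lt \<rho>"
    and "MaxPR X lt \<rho> F"
  shows "(\<exists>f Z. pcomp2 X \<rho> f \<and> mono2 X lt f \<and> (\<forall>x\<in>elems X. F x = maxD lt f x)
              \<and> sigma01 X Z \<and> (\<forall>x\<in>elems X. \<forall>t. f x t \<noteq> None \<longleftrightarrow> x \<in> Z))
       \<and> (sigma01 X {x\<in>elems X. F x \<noteq> None} \<longrightarrow>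
           (\<exists>f. pcomp2 X \<rho> f \<and> mono2 X lt f \<and> (\<forall>x\<in>elems X. F x = maxD lt f x)
              \<and> (\<forall>x\<in>elems X. \<forall>t. f x t \<noteq> None \<longleftrightarrow> F x \<noteq> None)))"
proof -
  note irr = assms(1) and tr = assms(2)
  have sj: "surj \<rho>" and ij: "inj \<rho>" using assms(3) by (auto simp: bij_def)
  from assms(5) obtain f0 where pc: "pcomp2 X \<rho> f0" and mo: "mono2 X lt f0"
    and eqF: "\<forall>x\<in>elems X. F x = maxD lt f0 x" unfolding MaxPR_def by blast
  from pc obtain r0 where r0: "\<forall>x\<in>elems X. \<forall>t y. eval r0 [enc (VP x (VN t))] y \<longleftrightarrow> f0 x t = Some (\<rho> y)"
    unfolding pcomp2_def by blast
  define f where "f x t = (if \<exists>j. LL r0 (enc x) j \<noteq> 0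
      then Some (\<rho> (LL r0 (enc x) ((LEAST j. LL r0 (enc x) j \<noteq> 0) + t) - 1)) else None)" for x t
  define Z where "Z = {x\<in>elems X. \<exists>j. LL r0 (enc x) j \<noteq> 0}"
  have H1: "\<forall>t y. eval r0 [prod_encode (enc x, t)] y \<longleftrightarrow> f0 x t = Some (\<rho> y)" if "x \<in> elems X" for x
    using r0 that by simp
  have H2: "\<forall>s t u v. s \<le> t \<longrightarrow> f0 x s = Some u \<longrightarrow> f0 x t = Some v \<longrightarrow> u = v \<or> lt u v"
    if "x \<in> elems X" for x
    using mo that unfolding mono2_def by blast
  have fx: "f x = (\<lambda>t. if \<exists>j. LL r0 (enc x) j \<noteq> 0
      then Some (\<rho> (LL r0 (enc x) ((LEAST j. LL r0 (enc x) j \<noteq> 0) + t) - 1)) else None)" for x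
    unfolding f_def by (rule ext) simp
  have S1: "(\<exists>j. LL r0 (enc x) j \<noteq> 0) \<longleftrightarrow> (\<exists>s. f0 x s \<noteq> None)" if x: "x \<in> elems X" for x
    using sem(1)[OF H1[OF x] H2[OF x] sj fx] .
  have S2: "\<forall>t d. f x t = Some d \<longrightarrow> (\<exists>s. f0 x s = Some d)" if x: "x \<in> elems X" for x
    using sem(2)[OF H1[OF x] H2[OF x] sj fx] .
  have S3: "\<forall>s t u v. s \<le> t \<longrightarrow> f x s = Some u \<longrightarrow> f x t = Some v \<longrightarrow> u = v \<or> lt u v"
    if x: "x \<in> elems X" for x
    using sem(3)[OF H1[OF x] H2[OF x] sj fx] .
  have S4: "\<forall>s d. f0 x s = Some d \<longrightarrow> (\<exists>t d'. f x t = Some d' \<and> (d = d' \<or> lt d d'))"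
    if x: "x \<in> elems X" for x
    using sem(4)[OF H1[OF x] H2[OF x] sj fx] .
  have RRf: "eval (RR r0) [enc (VP x (VN t))] y \<longleftrightarrow> f x t = Some (\<rho> y)" for x t y
  proof -
    have "f x t = Some (\<rho> y) \<longleftrightarrow> (\<exists>j. LL r0 (enc x) j \<noteq> 0) \<and> y = LL r0 (enc x) ((LEAST j. LL r0 (enc x) j \<noteq> 0) + t) - 1"
      unfolding f_def using inj_eq[OF ij] by auto
    then show ?thesis using eval_RR_iff[of r0 "enc x" t y] by simp
  qed
  have pcf: "pcomp2 X \<rho> f"
    unfolding pcomp2_def using RRf by blast
  have mof: "mono2 X lt f"
    unfolding mono2_def using S3 by blast
  have mxf: "\<forall>x\<in>elems X. F x = maxD lt f x"
  proof
    fix x assume x: "x \<in> elems X"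
    have "maxD lt (\<lambda>_. f x) x = maxD lt (\<lambda>_. f0 x) x"
      by (rule maxD_eq[OF irr tr H2[OF x] S2[OF x] S4[OF x]])
    moreover have "maxD lt (\<lambda>_. f x) x = maxD lt f x" by (rule maxD_cong) simp
    moreover have "maxD lt (\<lambda>_. f0 x) x = maxD lt f0 x" by (rule maxD_cong) simp
    ultimately show "F x = maxD lt f x" using eqF x by simp
  qed
  have sZ: "sigma01 X Z"
    unfolding sigma01_def Z_def
  proof (intro conjI exI[of _ "MG r0"] ballI)
    fix x assume x: "x \<in> elems X"
    have "(\<exists>y. eval (MG r0) [enc x] y) \<longleftrightarrow> (\<exists>j. LL r0 (enc x) j \<noteq> 0)"
      using eval_MG_iff[of r0 "enc x"] by blast
    then show "x \<in> {x \<in> elems X. \<exists>j. LL r0 (enc x) j \<noteq> 0} \<longleftrightarrow> (\<exists>y. eval (MG r0) [enc x] y)"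
      using x by simp
  qed auto
  have domf: "\<forall>x\<in>elems X. \<forall>t. f x t \<noteq> None \<longleftrightarrow> x \<in> Z"
    unfolding f_def Z_def by auto
  have part1: "\<exists>f Z. pcomp2 X \<rho> f \<and> mono2 X lt f \<and> (\<forall>x\<in>elems X. F x = maxD lt f x)
              \<and> sigma01 X Z \<and> (\<forall>x\<in>elems X. \<forall>t. f x t \<noteq> None \<longleftrightarrow> x \<in> Z)"
    using pcf mof mxf sZ domf by blast
  have part2: "\<exists>f. pcomp2 X \<rho> f \<and> mono2 X lt f \<and> (\<forall>x\<in>elems X. F x = maxD lt f x)
              \<and> (\<forall>x\<in>elems X. \<forall>t. f x t \<noteq> None \<longleftrightarrow> F x \<noteq> None)"
    if sF: "sigma01 X {x\<in>elems X. F x \<noteq> None}"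
  proof -
    from sF obtain rF where rF: "\<forall>x\<in>elems X. x \<in> {x\<in>elems X. F x \<noteq> None} \<longleftrightarrow> (\<exists>y. eval rF [enc x] y)"
      unfolding sigma01_def by blast
    define f2 where "f2 x t = (if F x \<noteq> None then f x t else None)" for x t
    have FZ: "F x \<noteq> None \<Longrightarrow> x \<in> Z" if x: "x \<in> elems X" for x
    proof -
      assume Fx: "F x \<noteq> None"
      from eqF x have "F x = maxD lt f0 x" by blast
      with Fx have "maxD lt f0 x \<noteq> None" by simp
      then have "\<exists>s. f0 x s \<noteq> None" by (rule maxD_Some_ex)
      then have ex: "\<exists>j. LL r0 (enc x) j \<noteq> 0" by (rule iffD2[OF S1[OF x]])
      show "x \<in> Z" unfolding Z_def using x ex by blast
    qed
    have "pcomp2 X \<rho> f2"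
      unfolding pcomp2_def
    proof (intro exI[of _ "Comp (Proj 1) [Comp rF [FSTr], RR r0]"] ballI allI)
      fix x t y assume x: "x \<in> elems X"
      have "eval (Comp (Proj 1) [Comp rF [FSTr], RR r0]) [enc (VP x (VN t))] y \<longleftrightarrow>
          (\<exists>w. eval rF [enc x] w) \<and> eval (RR r0) [enc (VP x (VN t))] y"
        using eval_R2_iff[of rF "RR r0" "enc x" t y] by simp
      also have "\<dots> \<longleftrightarrow> F x \<noteq> None \<and> f x t = Some (\<rho> y)"
      proof -
        have "(\<exists>w. eval rF [enc x] w) \<longleftrightarrow> F x \<noteq> None" using rF x by blast
        then show ?thesis using RRf by simp
      qed
      also have "\<dots> \<longleftrightarrow> f2 x t = Some (\<rho> y)" unfolding f2_def by simp
      finally show "eval (Comp (Proj 1) [Comp rF [FSTr], RR r0]) [enc (VP x (VN t))] y \<longleftrightarrow> f2 x t = Some (\<rho> y)" .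
    qed
    moreover have "mono2 X lt f2"
      unfolding mono2_def
    proof (intro ballI allI impI)
      fix x s t a b assume x: "x \<in> elems X" and st: "s \<le> t" and a: "f2 x s = Some a" and b: "f2 x t = Some b"
      from a b have "f x s = Some a" "f x t = Some b" unfolding f2_def by (auto split: if_splits)
      then show "a = b \<or> lt a b" using mof x st unfolding mono2_def by blast
    qed
    moreover have "\<forall>x\<in>elems X. F x = maxD lt f2 x"
    proof
      fix x assume x: "x \<in> elems X"
      show "F x = maxD lt f2 x"
      proof (cases "F x = None")
        case True
        then show ?thesis using maxD_None[of f2 x lt] unfolding f2_def by simp
      next
        case False
        then have "maxD lt f2 x = maxD lt f x" by (intro maxD_cong) (simp add: f2_def)
        then show ?thesis using mxf x by simp
      qed
    qed
    moreover have "\<forall>x\<in>elems X. \<forall>t. f2 x t \<noteq> None \<longleftrightarrow> F x \<noteq> None"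
    proof (intro ballI allI)
      fix x t assume x: "x \<in> elems X"
      show "f2 x t \<noteq> None \<longleftrightarrow> F x \<noteq> None"
      proof (cases "F x = None")
        case True then show ?thesis unfolding f2_def by simp
      next
        case False
        then have "x \<in> Z" using FZ[OF x] by blast
        then have "f x t \<noteq> None" using domf x by blast
        then show ?thesis using False unfolding f2_def by simp
      qed
    qed
    ultimately show ?thesis by blast
  qed
  show ?thesis using part1 part2 by blast
qed


end
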